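(* Let $G$ be a graph on $n$ nodes with $m$ edges, let $k\in\{1,\dots,n-1\}$, and let $T$ be a threshold graph on $n$ nodes with $m$ edges such that $\sum_{i=1}^k\lambda_i(T)\ge\sum_{i=1}^k\lambda_i(G)$. Then the complement graphs $\bar G$ and $\bar T$ satisfy $\sum_{i=1}^{n-k-1}\lambda_i(\bar T)\ge\sum_{i=1}^{n-k-1}\lambda_i(\bar G)$. Moreover, every threshold graph $T$ on $n$ nodes with $m$ edges satisfies $\sum_{i=1}^{n-1}\lambda_i(\bar T)=\sum_{i=1}^{n-1}\lambda_i(\bar G)$.
   Context: All graphs are finite and simple; $\bar H$ denotes the complement of a graph $H$. For a graph $G$ on $n$ nodes, the Laplacian eigenvalues (eigenvalues of $L(G)=D(G)-A(G)$) are $\lambda_1(G)\ge\dots\ge\lambda_n(G)=0$. A threshold graph is a graph obtainable from the empty graph by repeatedly adding a new node that is either isolated or adjacent to all previously added nodes. *)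

theory Defs
  imports "Jordan_Normal_Form.Char_Poly" "HOL-Library.Multiset" "HOL-Combinatorics.Permutations"
begin

definition simple_graph :: "nat \<Rightarrow> (nat \<Rightarrow> nat \<Rightarrow> bool) \<Rightarrow> bool" where
  "simple_graph n E \<longleftrightarrow> (\<forall>i j. E i j \<longrightarrow> i < n \<and> j < n \<and> i \<noteq> j \<and> E j i)"

definition num_edges :: "nat \<Rightarrow> (nat \<Rightarrow> nat \<Rightarrow> bool) \<Rightarrow> nat" where
  "num_edges n E = card {(i, j). i < j \<and> j < n \<and> E i j}"

definition compl_graph :: "nat \<Rightarrow> (nat \<Rightarrow> nat \<Rightarrow> bool) \<Rightarrow> (nat \<Rightarrow> nat \<Rightarrow> bool)" where
  "compl_graph n E = (\<lambda>i j. i < n \<and> j < n \<and> i \<noteq> j \<and> \<not> E i j)"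

definition degree :: "nat \<Rightarrow> (nat \<Rightarrow> nat \<Rightarrow> bool) \<Rightarrow> nat \<Rightarrow> nat" where
  "degree n E i = card {j. j < n \<and> E i j}"

definition laplacian :: "nat \<Rightarrow> (nat \<Rightarrow> nat \<Rightarrow> bool) \<Rightarrow> real mat" where
  "laplacian n E = mat n n (\<lambda>(i, j). (if i = j then real (degree n E i) else 0)
                                     - (if E i j then 1 else 0))"

definition eig_mset :: "real mat \<Rightarrow> real multiset" where
  "eig_mset A = Abs_multiset (\<lambda>x. order x (char_poly A))"

text \<open>lam A i = i-th largest eigenvalue (1-based), lambda_1 >= ... >= lambda_n.\<close>
definition lam :: "real mat \<Rightarrow> nat \<Rightarrow> real" where
  "lam A i = rev (sorted_list_of_multiset (eig_mset A)) ! (i - 1)"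

definition lap_eig :: "nat \<Rightarrow> (nat \<Rightarrow> nat \<Rightarrow> bool) \<Rightarrow> nat \<Rightarrow> real" where
  "lap_eig n E i = lam (laplacian n E) i"

inductive threshold_built :: "nat \<Rightarrow> (nat \<Rightarrow> nat \<Rightarrow> bool) \<Rightarrow> bool" where
  empty: "threshold_built 0 (\<lambda>_ _. False)"
| isolated: "threshold_built n E \<Longrightarrow> threshold_built (Suc n) E"
| dominating: "threshold_built n E \<Longrightarrow>
     threshold_built (Suc n) (\<lambda>i j. E i j \<or> (i = n \<and> j < n) \<or> (j = n \<and> i < n))"

definition threshold_graph :: "nat \<Rightarrow> (nat \<Rightarrow> nat \<Rightarrow> bool) \<Rightarrow> bool" where
  "threshold_graph n E \<longleftrightarrow> simple_graph n E \<and>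
     (\<exists>\<pi>. \<pi> permutes {0..<n} \<and> threshold_built n (\<lambda>i j. E (\<pi> i) (\<pi> j)))"

end

theory Submission
  imports Defs "Jordan_Normal_Form.Schur_Decomposition"
begin


lemma order_prod_lin: "Polynomial.order x (\<Prod>r\<leftarrow>rs. [:-r,1:]) = count (mset rs) (x::real)"
proof (induction rs)
  case Nil
  then show ?case by (simp add: order_0I)
next
  case (Cons r rs)
  have nz: "(\<Prod>r\<leftarrow>rs. [:-r,1:]) \<noteq> (0::real poly)"
    by (auto simp add: prod_list_zero_iff)
  have "Polynomial.order x (\<Prod>r\<leftarrow>r#rs. [:-r,1:]) = Polynomial.order x ([:-r,1:] * (\<Prod>r\<leftarrow>rs. [:-r,1:]))"
    by simp
  also have "\<dots> = Polynomial.order x [:-r,1:] + Polynomial.order x (\<Prod>r\<leftarrow>rs. [:-r,1:])"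
    by (rule order_mult) (rule no_zero_divisors, simp, rule nz)
  finally show ?case using Cons by (simp add: order_linear')
qed

lemma eig_mset_of: assumes "char_poly A = (\<Prod>r\<leftarrow>rs. [:-r,1:])" shows "eig_mset A = mset rs"
proof -
  have "(\<lambda>x. Polynomial.order x (char_poly A)) = count (mset rs)"
    using assms order_prod_lin by auto
  then show ?thesis unfolding eig_mset_def by (simp add: count_inverse)
qed

lemma sym_eig_real:
  fixes A :: "real mat" and v :: "complex vec" and a :: complex
  assumes A: "A \<in> carrier_mat n n" and sym: "\<And>i j. i<n \<Longrightarrow> j<n \<Longrightarrow> A$$(i,j) = A$$(j,i)"
    and v: "v \<in> carrier_vec n" "v \<noteq> 0\<^sub>v n" and ev: "map_mat of_real A *\<^sub>v v = a \<cdot>\<^sub>v v"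
  shows "Im a = 0"
proof -
  define f where "f i = v $ i" for i
  have eq: "(\<Sum>j<n. of_real (A$$(i,j)) * f j) = a * f i" if "i < n" for i
  proof -
    have "(map_mat of_real A *\<^sub>v v) $ i = (a \<cdot>\<^sub>v v) $ i" using ev by simp
    then show ?thesis using that A v unfolding f_def
      by (auto simp: scalar_prod_def lessThan_atLeast0 intro!: sum.cong)
  qed
  define q where "q = (\<Sum>i<n. cnj (f i) * (\<Sum>j<n. of_real (A$$(i,j)) * f j))"
  have q1: "q = a * of_real (\<Sum>i<n. (cmod (f i))^2)"
  proof -
    have "q = (\<Sum>i<n. a * (cnj (f i) * f i))" unfolding q_def using eq
      by (auto intro!: sum.cong)
    also have "\<dots> = a * (\<Sum>i<n. of_real ((cmod (f i))^2))"
    proof -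
    have nsq: "\<And>z. z * cnj z = (complex_of_real (cmod z))^2" by (metis complex_norm_square of_real_power)
    show ?thesis by (auto simp add: sum_distrib_left nsq mult.commute intro!: sum.cong)
  qed
    finally show ?thesis by simp
  qed
  have "cnj q = (\<Sum>i<n. \<Sum>j<n. of_real (A$$(i,j)) * f i * cnj (f j))"
    unfolding q_def by (simp add: sum_distrib_left mult_ac)
  also have "\<dots> = (\<Sum>j<n. \<Sum>i<n. of_real (A$$(i,j)) * f i * cnj (f j))"
    by (rule sum.swap)
  also have "\<dots> = (\<Sum>j<n. \<Sum>i<n. of_real (A$$(j,i)) * cnj (f j) * f i)"
    using sym by (auto intro!: sum.cong simp: mult_ac)
  also have "\<dots> = q" unfolding q_def by (simp add: sum_distrib_left mult_ac)
  finally have "cnj q = q" .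
  then have "Im q = 0" by (metis complex_cnj_cancel_iff Reals_cnj_iff complex_is_Real_iff)
  obtain i where i: "i < n" "v $ i \<noteq> 0" using v
    by (metis eq_vecI carrier_vecD index_zero_vec)
  have "(cmod (f i))^2 > 0" using i unfolding f_def by simp
  moreover have "(cmod (f i))^2 \<le> (\<Sum>i<n. (cmod (f i))^2)"
    by (rule member_le_sum) (use i in auto)
  ultimately have pos: "(\<Sum>i<n. (cmod (f i))^2) > 0" by linarith
  have "Im q = Im a * (\<Sum>i<n. (cmod (f i))^2)" unfolding q1 by simp
  with \<open>Im q = 0\<close> pos show ?thesis by simp
qed




lemma sym_split:
  fixes A :: "real mat"
  assumes A: "A \<in> carrier_mat n n" and sA: "\<And>i j. i<n \<Longrightarrow> j<n \<Longrightarrow> A$$(i,j) = A$$(j,i)"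
  shows "\<exists>rs. char_poly A = (\<Prod>r\<leftarrow>rs. [:-r,1:]) \<and> length rs = n"
proof -
  interpret rp: map_poly_inj_comm_ring_hom "of_real :: real \<Rightarrow> complex" by unfold_locales
  let ?Ac = "map_mat complex_of_real A"
  have Ac: "?Ac \<in> carrier_mat n n" using A by simp
  obtain as where cas: "char_poly ?Ac = (\<Prod>a\<leftarrow>as. [:-a,1:])" and len: "length as = n"
    using char_poly_factorized[OF Ac] by blast
  have real: "Im a = 0" if "a \<in> set as" for a
  proof -
    have "poly (char_poly ?Ac) a = 0" using that unfolding cas by (rule linear_poly_root)
    then have "eigenvalue ?Ac a" using eigenvalue_root_char_poly[OF Ac] by simp
    then obtain v where "eigenvector ?Ac v a" unfolding eigenvalue_def ..
    then have "v \<in> carrier_vec n" "v \<noteq> 0\<^sub>v n" "?Ac *\<^sub>v v = a \<cdot>\<^sub>v v"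
      unfolding eigenvector_def using Ac by auto
    then show ?thesis using sym_eig_real[OF A sA] by blast
  qed
  define rs where "rs = map Re as"
  have as_eq: "as = map complex_of_real rs" unfolding rs_def using real
    by (induction as) (auto simp: complex_eq_iff)
  have "map_poly complex_of_real (char_poly A) = map_poly complex_of_real (\<Prod>r\<leftarrow>rs. [:-r,1:])"
  proof -
    have "map_poly complex_of_real (char_poly A) = char_poly ?Ac"
      using A by (rule sym[OF of_real_hom.char_poly_hom])
    also have "\<dots> = (\<Prod>a\<leftarrow>as. [:-a,1:])" by (rule cas)
    also have "\<dots> = map_poly complex_of_real (\<Prod>r\<leftarrow>rs. [:-r,1:])"
      unfolding as_eq by (simp add: rp.hom_prod_list o_def)
    finally show ?thesis .
  qed
  then have "char_poly A = (\<Prod>r\<leftarrow>rs. [:-r,1:])" by (rule rp.injectivity)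
  moreover have "length rs = n" using len rs_def by simp
  ultimately show ?thesis by blast
qed




definition tr :: "real mat \<Rightarrow> real" where "tr A = (\<Sum>i<dim_row A. A $$ (i,i))"

lemma tr_mult_expand: assumes "X \<in> carrier_mat n m" "Y \<in> carrier_mat m n"
  shows "tr (X * Y) = (\<Sum>i<n. \<Sum>k<m. X$$(i,k) * Y$$(k,i))"
  using assms unfolding tr_def
  by (auto simp: scalar_prod_def lessThan_atLeast0 intro!: sum.cong)

lemma tr_comm: assumes "X \<in> carrier_mat n m" "Y \<in> carrier_mat m n"
  shows "tr (X * Y) = tr (Y * X)"
proof -
  have "tr (X * Y) = (\<Sum>i<n. \<Sum>k<m. X$$(i,k) * Y$$(k,i))" by (rule tr_mult_expand[OF assms])
  also have "\<dots> = (\<Sum>k<m. \<Sum>i<n. Y$$(k,i) * X$$(i,k))" by (subst sum.swap) (simp add: mult.commute)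
  also have "\<dots> = tr (Y * X)" by (rule tr_mult_expand[OF assms(2,1), symmetric])
  finally show ?thesis .
qed

lemma tr_eig: fixes A :: "real mat"
  assumes A: "A \<in> carrier_mat n n" and c: "char_poly A = (\<Prod>r\<leftarrow>rs. [:-r,1:])"
  shows "tr A = sum_list rs"
proof -
  obtain B P Q where s: "schur_decomposition A rs = (B,P,Q)" by (cases "schur_decomposition A rs") auto
  from schur_decomposition[OF A c s] have sw: "similar_mat_wit A B P Q" and d: "diag_mat B = rs" by auto
  from sw A have P: "P \<in> carrier_mat n n" and B: "B \<in> carrier_mat n n" and Q: "Q \<in> carrier_mat n n"
    and QP: "Q * P = 1\<^sub>m n" and AeQ: "A = P * B * Q"
    unfolding similar_mat_wit_def Let_def by auto
  have "tr A = tr ((P * B) * Q)" using AeQ by simp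
  also have "\<dots> = tr (Q * (P * B))" by (rule tr_comm) (use P B Q in auto)
  also have "Q * (P * B) = (Q * P) * B" using P B Q by (simp add: assoc_mult_mat)
  also have "\<dots> = B" using QP B by simp
  also have "tr B = sum_list (diag_mat B)" using B unfolding tr_def diag_mat_def
    by (simp add: sum_list_sum_nth lessThan_atLeast0)
  finally show ?thesis using d by simp
qed




definition ind :: "(nat \<Rightarrow> nat \<Rightarrow> bool) \<Rightarrow> nat \<Rightarrow> nat \<Rightarrow> real" where
  "ind E i j = (if E i j then 1 else 0)"

lemma degree_sum: "real (degree n E i) = (\<Sum>j<n. ind E i j)"
proof -
  have "(\<Sum>j\<in>{j\<in>{..<n}. E i j}. 1::real) = (\<Sum>j<n. if E i j then 1 else 0)"
    by (rule sum.inter_filter) simp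
  then have "(\<Sum>j<n. ind E i j) = (\<Sum>j\<in>{j\<in>{..<n}. E i j}. 1)"
    unfolding ind_def by simp
  also have "{j\<in>{..<n}. E i j} = {j. j < n \<and> E i j}" by auto
  finally show ?thesis unfolding degree_def by simp
qed

lemma lap_carrier[simp]: "laplacian n E \<in> carrier_mat n n"
  unfolding laplacian_def by simp

lemma lap_entry: "i < n \<Longrightarrow> j < n \<Longrightarrow> laplacian n E $$ (i,j) =
   (if i = j then (\<Sum>k<n. ind E i k) else 0) - ind E i j"
  unfolding laplacian_def by (simp add: degree_sum ind_def)

lemma sg_ind_sym: "simple_graph n E \<Longrightarrow> ind E i j = ind E j i"
  unfolding simple_graph_def ind_def by metis

lemma sg_ind_irr: "simple_graph n E \<Longrightarrow> ind E i i = 0"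
  unfolding simple_graph_def ind_def by auto

lemma lap_sym: "simple_graph n E \<Longrightarrow> i < n \<Longrightarrow> j < n \<Longrightarrow>
  laplacian n E $$ (i,j) = laplacian n E $$ (j,i)"
  by (simp add: lap_entry sg_ind_sym)

lemma lap_rowsum: assumes "simple_graph n E" "i < n"
  shows "(\<Sum>j<n. laplacian n E $$ (i,j)) = 0"
proof -
  have "(\<Sum>j<n. laplacian n E $$ (i,j)) = (\<Sum>j<n. (if i = j then (\<Sum>k<n. ind E i k) else 0)) - (\<Sum>j<n. ind E i j)"
    using assms by (simp add: lap_entry sum_subtractf)
  also have "(\<Sum>j<n. (if i = j then (\<Sum>k<n. ind E i k) else 0)) = (\<Sum>k<n. ind E i k)"
    using assms(2) by (simp add: sum.delta)
  finally show ?thesis by simp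
qed

lemma lap_colsum: assumes "simple_graph n E" "j < n"
  shows "(\<Sum>i<n. laplacian n E $$ (i,j)) = 0"
  using lap_rowsum[OF assms] lap_sym[OF assms(1) _ assms(2)]
  by (metis (no_types, lifting) lessThan_iff sum.cong)

lemma quad_identity: assumes sg: "simple_graph n E"
  shows "2 * (\<Sum>i<n. v i * (\<Sum>j<n. laplacian n E $$ (i,j) * v j))
       = (\<Sum>i<n. \<Sum>j<n. ind E i j * (v i - v j)^2)"
proof -
  have L: "(\<Sum>i<n. v i * (\<Sum>j<n. laplacian n E $$ (i,j) * v j))
       = (\<Sum>i<n. \<Sum>j<n. ind E i j * (v i)^2) - (\<Sum>i<n. \<Sum>j<n. ind E i j * v i * v j)"
  proof -
    have "(\<Sum>i<n. v i * (\<Sum>j<n. laplacian n E $$ (i,j) * v j))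
       = (\<Sum>i<n. (\<Sum>j<n. ind E i j * (v i)^2) - (\<Sum>j<n. ind E i j * v i * v j))"
    proof (rule sum.cong[OF refl])
      fix i assume i: "i \<in> {..<n}"
      have "(\<Sum>j<n. laplacian n E $$ (i,j) * v j) = (\<Sum>j<n. (if i = j then (\<Sum>k<n. ind E i k) * v j else 0) - ind E i j * v j)"
        using i by (intro sum.cong) (auto simp: lap_entry algebra_simps)
      also have "\<dots> = (\<Sum>j<n. (if i = j then (\<Sum>k<n. ind E i k) * v j else 0)) - (\<Sum>j<n. ind E i j * v j)"
        by (rule sum_subtractf)
      also have "(\<Sum>j<n. (if i = j then (\<Sum>k<n. ind E i k) * v j else 0)) = (\<Sum>k<n. ind E i k) * v i"
        using i by (simp add: sum.delta)
      finally have e: "(\<Sum>j<n. laplacian n E $$ (i,j) * v j) = (\<Sum>k<n. ind E i k) * v i - (\<Sum>j<n. ind E i j * v j)" .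
      have e2: "(\<Sum>j<n. ind E i j * (v i)^2) = (\<Sum>k<n. ind E i k) * v i * v i"
        by (simp add: sum_distrib_right power2_eq_square mult.assoc)
      have e3: "(\<Sum>j<n. ind E i j * v i * v j) = v i * (\<Sum>j<n. ind E i j * v j)"
        by (simp add: sum_distrib_left mult_ac)
      show "v i * (\<Sum>j<n. laplacian n E $$ (i,j) * v j) = (\<Sum>j<n. ind E i j * (v i)^2) - (\<Sum>j<n. ind E i j * v i * v j)"
        unfolding e e2 e3 by (simp add: algebra_simps)
    qed
    then show ?thesis by (simp add: sum_subtractf)
  qed
  have sw: "(\<Sum>i<n. \<Sum>j<n. ind E i j * (v j)^2) = (\<Sum>i<n. \<Sum>j<n. ind E i j * (v i)^2)"
    by (subst sum.swap) (simp add: sg_ind_sym[OF sg])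
  have "(\<Sum>i<n. \<Sum>j<n. ind E i j * (v i - v j)^2) =
        (\<Sum>i<n. \<Sum>j<n. ind E i j * (v i)^2) + (\<Sum>i<n. \<Sum>j<n. ind E i j * (v j)^2) - 2 * (\<Sum>i<n. \<Sum>j<n. ind E i j * v i * v j)"
    by (simp add: power2_diff algebra_simps sum.distrib sum_subtractf sum_distrib_left)
  then show ?thesis using L sw by simp
qed

lemma quad_nonneg: assumes sg: "simple_graph n E"
  shows "(\<Sum>i<n. v i * (\<Sum>j<n. laplacian n E $$ (i,j) * v j)) \<ge> 0"
proof -
  have "(\<Sum>i<n. \<Sum>j<n. ind E i j * (v i - v j)^2) \<ge> 0"
    by (intro sum_nonneg) (auto simp: ind_def)
  then show ?thesis using quad_identity[OF sg, of v] by simp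
qed




lemma lap_dim[simp]: "dim_row (laplacian n E) = n" "dim_col (laplacian n E) = n"
  unfolding laplacian_def by simp_all

lemma lap_eig_nonneg: assumes sg: "simple_graph n E"
  and c: "char_poly (laplacian n E) = (\<Prod>r\<leftarrow>rs. [:-r,1:])" and r: "r \<in> set rs"
  shows "r \<ge> 0"
proof -
  let ?L = "laplacian n E"
  have "poly (char_poly ?L) r = 0" using r unfolding c by (rule linear_poly_root)
  then have "eigenvalue ?L r" using eigenvalue_root_char_poly[OF lap_carrier] by simp
  then obtain v where "eigenvector ?L v r" unfolding eigenvalue_def ..
  then have v: "v \<in> carrier_vec n" "v \<noteq> 0\<^sub>v n" "?L *\<^sub>v v = r \<cdot>\<^sub>v v"
    unfolding eigenvector_def by auto
  define f where "f i = v $ i" for i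
  have eq: "(\<Sum>j<n. ?L $$ (i,j) * f j) = r * f i" if "i < n" for i
  proof -
    have "(?L *\<^sub>v v) $ i = (r \<cdot>\<^sub>v v) $ i" using v by simp
    then show ?thesis using that v(1) unfolding f_def
      by (auto simp: scalar_prod_def lessThan_atLeast0 intro!: sum.cong)
  qed
  have "(\<Sum>i<n. f i * (\<Sum>j<n. ?L $$ (i,j) * f j)) = (\<Sum>i<n. r * (f i)^2)"
    using eq by (auto intro!: sum.cong simp: power2_eq_square)
  also have "\<dots> = r * (\<Sum>i<n. (f i)^2)" by (simp add: sum_distrib_left)
  finally have qe: "(\<Sum>i<n. f i * (\<Sum>j<n. ?L $$ (i,j) * f j)) = r * (\<Sum>i<n. (f i)^2)" .
  obtain i where i: "i < n" "v $ i \<noteq> 0" using v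
    by (metis eq_vecI carrier_vecD index_zero_vec)
  have "(f i)^2 > 0" using i unfolding f_def by simp
  moreover have "(f i)^2 \<le> (\<Sum>i<n. (f i)^2)"
    by (rule member_le_sum) (use i in auto)
  ultimately have pos: "(\<Sum>i<n. (f i)^2) > 0" by linarith
  have "r * (\<Sum>i<n. (f i)^2) \<ge> 0" using quad_nonneg[OF sg, of f] qe by simp
  with pos show ?thesis by (simp add: zero_le_mult_iff)
qed

lemma lap_zero_eig: assumes sg: "simple_graph n E" and n: "n \<ge> 1"
  and c: "char_poly (laplacian n E) = (\<Prod>r\<leftarrow>rs. [:-r,1:])"
  shows "0 \<in> set rs"
proof -
  let ?L = "laplacian n E"
  have "?L *\<^sub>v (vec n (\<lambda>_. 1)) = 0 \<cdot>\<^sub>v (vec n (\<lambda>_. 1))"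
  proof (rule eq_vecI)
    fix i assume "i < dim_vec (0 \<cdot>\<^sub>v (vec n (\<lambda>_. 1)))"
    then have i: "i < n" by simp
    have "(?L *\<^sub>v (vec n (\<lambda>_. 1))) $ i = (\<Sum>j<n. ?L $$ (i,j))"
      using i by (simp add: scalar_prod_def lessThan_atLeast0)
    then show "(?L *\<^sub>v (vec n (\<lambda>_. 1))) $ i = (0 \<cdot>\<^sub>v (vec n (\<lambda>_. 1))) $ i" using lap_rowsum[OF sg i] i by simp
  qed simp
  moreover have "(vec n (\<lambda>_. 1)) \<noteq> (0\<^sub>v n :: real vec)"
  proof
    assume "(vec n (\<lambda>_. 1)) = (0\<^sub>v n :: real vec)"
    then have "((vec n (\<lambda>_. 1)) :: real vec) $ 0 = (0\<^sub>v n :: real vec) $ 0" by simp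
    then show False using n by simp
  qed
  ultimately have "eigenvector ?L ((vec n (\<lambda>_. 1))) 0" unfolding eigenvector_def by simp
  then have "eigenvalue ?L 0" unfolding eigenvalue_def by blast
  then have "poly (char_poly ?L) 0 = 0" using eigenvalue_root_char_poly[OF lap_carrier] by simp
  then show ?thesis unfolding c poly_prod_list_zero_iff by auto
qed

lemma sum_degree: assumes sg: "simple_graph n E"
  shows "(\<Sum>i<n. degree n E i) = 2 * num_edges n E"
proof -
  define P1 where "P1 = {(i,j). i < j \<and> j < n \<and> E i j}"
  have fin: "finite P1" unfolding P1_def
    by (rule finite_subset[of _ "{..<n} \<times> {..<n}"]) auto
  have "(\<Sum>i<n. degree n E i) = card (Sigma {..<n} (\<lambda>i. {j. j < n \<and> E i j}))"
    unfolding degree_def by (subst card_SigmaI) auto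
  also have "Sigma {..<n} (\<lambda>i. {j. j < n \<and> E i j}) = P1 \<union> prod.swap ` P1"
    using sg unfolding P1_def simple_graph_def by (auto simp: image_iff) (metis linorder_neqE_nat)+
  also have "card (P1 \<union> prod.swap ` P1) = card P1 + card (prod.swap ` P1)"
    by (rule card_Un_disjoint) (use fin in \<open>auto simp: P1_def\<close>)
  also have "card (prod.swap ` P1) = card P1" by (rule card_image) simp
  finally show ?thesis unfolding num_edges_def P1_def by simp
qed

lemma tr_lap: assumes sg: "simple_graph n E"
  shows "tr (laplacian n E) = 2 * real (num_edges n E)"
proof -
  have "tr (laplacian n E) = (\<Sum>i<n. real (degree n E i))"
    unfolding tr_def using sg_ind_irr[OF sg] by (auto intro!: sum.cong simp: lap_entry degree_sum)
  also have "\<dots> = real (\<Sum>i<n. degree n E i)" by simp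
  also have "\<dots> = 2 * real (num_edges n E)" using sum_degree[OF sg] by simp
  finally show ?thesis .
qed




lemma mult_entry: assumes "A \<in> carrier_mat n n" "B \<in> carrier_mat n n" "i < n" "j < n"
  shows "(A * B) $$ (i,j) = (\<Sum>k<n. A$$(i,k) * B$$(k,j))"
  using assms by (simp add: scalar_prod_def lessThan_atLeast0)

lemma Dm_mult: fixes X :: "real mat" assumes X: "X \<in> carrier_mat n n" and ij: "i < n" "j < n"
  shows "(mat n n (\<lambda>(i,j). if i = j then (if i = 0 then c else 1) else 0) * X) $$ (i,j) = (if i = 0 then c else 1) * X$$(i,j)"
proof -
  have "(mat n n (\<lambda>(i,j). if i = j then (if i = 0 then c else 1) else 0) * X) $$ (i,j)
     = (\<Sum>k<n. (mat n n (\<lambda>(i,j). if i = j then (if i = 0 then c else 1) else 0)) $$ (i,k) * X$$(k,j))"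
    by (rule mult_entry[OF _ X ij]) simp
  also have "\<dots> = (\<Sum>k<n. if k = i then (if i = 0 then c else 1) * X$$(i,j) else 0)"
    by (rule sum.cong) (use ij in auto)
  also have "\<dots> = (if i = 0 then c else 1) * X$$(i,j)" using ij by simp
  finally show ?thesis .
qed

lemma Em_mult: fixes X :: "real mat" assumes X: "X \<in> carrier_mat n n" and ij: "i < n" "j < n"
  shows "(mat n n (\<lambda>(i,j). if i = 0 \<or> i = j then 1 else 0) * X) $$ (i,j) = (if i = 0 then (\<Sum>k<n. X$$(k,j)) else X$$(i,j))"
proof -
  have "(mat n n (\<lambda>(i,j). if i = 0 \<or> i = j then 1 else 0) * X) $$ (i,j)
     = (\<Sum>k<n. (mat n n (\<lambda>(i,j). if i = 0 \<or> i = j then 1 else 0)) $$ (i,k) * X$$(k,j))"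
    by (rule mult_entry[OF _ X ij]) simp
  also have "\<dots> = (\<Sum>k<n. if i = 0 then X$$(k,j) else if k = i then X$$(i,j) else 0)"
    by (rule sum.cong) (use ij in auto)
  also have "\<dots> = (if i = 0 then (\<Sum>k<n. X$$(k,j)) else X$$(i,j))" using ij by simp
  finally show ?thesis .
qed

lemma F_mult: fixes X :: "real mat" assumes X: "X \<in> carrier_mat n n" and ij: "i < n" "j < n"
  shows "(mat n n (\<lambda>(i,j). if i = j then 1 else if j = 0 then -1 else 0) * X) $$ (i,j) = (if i = 0 then X$$(0,j) else X$$(i,j) - X$$(0,j))"
proof -
  have "(mat n n (\<lambda>(i,j). if i = j then 1 else if j = 0 then -1 else 0) * X) $$ (i,j)
     = (\<Sum>k<n. (mat n n (\<lambda>(i,j). if i = j then 1 else if j = 0 then -1 else (0::real))) $$ (i,k) * X$$(k,j))"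
    by (rule mult_entry[OF _ X ij]) simp
  also have "\<dots> = (\<Sum>k<n. (if k = i then X$$(i,j) else 0) + (if i \<noteq> 0 \<and> k = 0 then - X$$(0,j) else 0))"
    by (rule sum.cong) (use ij in auto)
  also have "\<dots> = (\<Sum>k<n. (if k = i then X$$(i,j) else 0)) + (\<Sum>k<n. (if i \<noteq> 0 \<and> k = 0 then - X$$(0,j) else 0))"
    by (rule sum.distrib)
  also have "\<dots> = (if i = 0 then X$$(0,j) else X$$(i,j) - X$$(0,j))" using ij by auto
  finally show ?thesis .
qed

lemma pl: "prod_list (map f [0..<n]) = (\<Prod>i<n. f i)" for f :: "nat \<Rightarrow> real"
  by (induction n) (simp_all add: mult.commute)

lemma det_J: fixes K :: "real mat"
  assumes K: "K \<in> carrier_mat n n" and n: "0 < n" and cs: "\<And>j. j < n \<Longrightarrow> (\<Sum>i<n. K$$(i,j)) = y"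
  shows "y * det (K + mat n n (\<lambda>_. 1)) = (y + real n) * det K"
proof -
  define J :: "real mat" where "J = mat n n (\<lambda>_. 1)"
  define Em :: "real mat" where "Em = mat n n (\<lambda>(i,j). if i = 0 \<or> i = j then 1 else 0)"
  define Dm :: "real \<Rightarrow> real mat" where "Dm c = mat n n (\<lambda>(i,j). if i = j then (if i = 0 then c else 1) else 0)" for c
  define F :: "real mat" where "F = mat n n (\<lambda>(i,j). if i = j then 1 else if j = 0 then -1 else 0)"
  define N :: "real mat" where "N = mat n n (\<lambda>(i,j). if i = 0 then 1 else K$$(i,j))"
  define N' :: "real mat" where "N' = mat n n (\<lambda>(i,j). if i = 0 then 1 else K$$(i,j) + 1)"
  have car: "Em \<in> carrier_mat n n" "Dm c \<in> carrier_mat n n" "F \<in> carrier_mat n n"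
    "N \<in> carrier_mat n n" "N' \<in> carrier_mat n n" "J \<in> carrier_mat n n" for c
    unfolding Em_def Dm_def F_def N_def N'_def J_def by auto
  have KJ: "K + J \<in> carrier_mat n n" using K car by simp
  have detEm: "det Em = 1"
    by (subst det_upper_triangular[OF _ car(1)]) (auto simp: upper_triangular_def Em_def diag_mat_def pl)
  have detD: "det (Dm c) = c" for c
  proof -
    have "det (Dm c) = (\<Prod>i<n. if i = 0 then c else 1)"
      by (subst det_upper_triangular[OF _ car(2)]) (auto simp: upper_triangular_def Dm_def diag_mat_def pl intro!: prod.cong)
    also have "\<dots> = c" using n by (simp add: prod.delta)
    finally show ?thesis .
  qed
  have detF: "det F = 1"
    by (subst det_lower_triangular[OF _ car(3)]) (auto simp: F_def diag_mat_def pl)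
  have a: "Em * K = Dm y * N"
  proof (rule eq_matI)
    fix i j assume "i < dim_row (Dm y * N)" "j < dim_col (Dm y * N)"
    then have ij: "i < n" "j < n" using car(2)[of y] car(4) by auto
    show "(Em * K) $$ (i,j) = (Dm y * N) $$ (i,j)"
      unfolding Em_def Dm_def Em_mult[OF K ij] Dm_mult[OF car(4) ij] using ij cs[OF ij(2)]
      by (simp add: N_def)
  qed (use car(1) car(2)[of y] car(4) K in auto)
  have b: "Em * (K + J) = Dm (y + real n) * N'"
  proof (rule eq_matI)
    fix i j assume "i < dim_row (Dm (y + real n) * N')" "j < dim_col (Dm (y + real n) * N')"
    then have ij: "i < n" "j < n" using car(2)[of "y + real n"] car(5) by auto
    have cs': "(\<Sum>k<n. (K + J)$$(k,j)) = y + real n"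
    proof -
      have "(\<Sum>k<n. (K + J)$$(k,j)) = (\<Sum>k<n. K$$(k,j) + 1)"
        by (rule sum.cong) (use ij K in \<open>auto simp: J_def\<close>)
      also have "\<dots> = y + real n" using cs[OF ij(2)] by (simp add: sum.distrib)
      finally show ?thesis .
    qed
    show "(Em * (K + J)) $$ (i,j) = (Dm (y + real n) * N') $$ (i,j)"
      unfolding Em_def Dm_def Em_mult[OF KJ ij] Dm_mult[OF car(5) ij] using ij cs' K
      by (simp add: N'_def J_def)
  qed (use car(1) car(2)[of "y + real n"] car(5) KJ in auto)
  have c: "F * N' = N"
  proof (rule eq_matI)
    fix i j assume "i < dim_row N" "j < dim_col N"
    then have ij: "i < n" "j < n" using car(4) by auto
    show "(F * N') $$ (i,j) = N $$ (i,j)"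
      unfolding F_def F_mult[OF car(5) ij] using ij n by (simp add: N_def N'_def)
  qed (use car in auto)
  have dK: "det K = y * det N"
    using det_mult[OF car(1) K] det_mult[OF car(2) car(4), of y] a detEm detD by simp
  have dKJ: "det (K + J) = (y + real n) * det N"
  proof -
    have "det (K + J) = det (Em * (K + J))" using det_mult[OF car(1) KJ] detEm by simp
    also have "\<dots> = (y + real n) * det N'" using b det_mult[OF car(2) car(5)] detD by simp
    also have "det N' = det N" using c det_mult[OF car(3) car(5)] detF by simp
    finally show ?thesis .
  qed
  show ?thesis using dK dKJ unfolding J_def[symmetric] by simp
qed




lemma compl_sg: "simple_graph n E \<Longrightarrow> simple_graph n (compl_graph n E)"
  unfolding simple_graph_def compl_graph_def by metis

lemma compl_degree: assumes sg: "simple_graph n E" and i: "i < n"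
  shows "real (degree n (compl_graph n E) i) = real n - 1 - real (degree n E i)"
proof -
  let ?A = "{j. j < n \<and> compl_graph n E i j}" and ?B = "{j. j < n \<and> E i j}"
  have eq: "{..<n} = ?A \<union> ({i} \<union> ?B)" using i unfolding compl_graph_def by auto
  have d1: "?A \<inter> ({i} \<union> ?B) = {}" unfolding compl_graph_def by auto
  have d2: "{i} \<inter> ?B = {}" using sg unfolding simple_graph_def by auto
  have "n = card (?A \<union> ({i} \<union> ?B))" using eq by (metis card_lessThan)
  also have "\<dots> = card ?A + card ({i} \<union> ?B)" by (rule card_Un_disjoint) (use d1 in auto)
  also have "card ({i} \<union> ?B) = 1 + card ?B" by (subst card_Un_disjoint) (use d2 in auto)
  finally show ?thesis unfolding degree_def by simp
qed

lemma neg_prod: "(-1)^length rs * (\<Prod>r\<leftarrow>rs. (a - r)) = (\<Prod>r\<leftarrow>rs. (r - a :: real))"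
  by (induction rs) (auto simp: algebra_simps)

lemma char_compl_point: assumes sg: "simple_graph n E" and n: "0 < n"
  and c: "char_poly (laplacian n E) = (\<Prod>r\<leftarrow>rs. [:-r,1:])" and len: "length rs = n"
  shows "(x - real n) * poly (char_poly (laplacian n (compl_graph n E))) x = x * (\<Prod>r\<leftarrow>rs. (x - (real n - r)))"
proof -
  let ?L = "laplacian n E" and ?Lc = "laplacian n (compl_graph n E)"
  define K where "K = mat n n (\<lambda>(i,j). (if i = j then x - real n else 0) + ?L $$ (i,j))"
  define J :: "real mat" where "J = mat n n (\<lambda>_. 1)"
  have K: "K \<in> carrier_mat n n" unfolding K_def by simp
  have cs: "(\<Sum>i<n. K$$(i,j)) = x - real n" if j: "j < n" for j
  proof -
    have "(\<Sum>i<n. K$$(i,j)) = (\<Sum>i<n. (if i = j then x - real n else 0) + ?L $$ (i,j))"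
      by (rule sum.cong) (use j in \<open>auto simp: K_def\<close>)
    also have "\<dots> = x - real n" using lap_colsum[OF sg j] j by (simp add: sum.distrib)
    finally show ?thesis .
  qed
  have cm: "- char_matrix ?Lc x = K + J"
  proof (rule eq_matI)
    fix i j assume "i < dim_row (K + J)" "j < dim_col (K + J)"
    then have ij: "i < n" "j < n" using K unfolding J_def by auto
    have e1: "?Lc $$ (i,j) = (if i = j then real n - 1 - real (degree n E i) else 0) - (if i \<noteq> j \<and> \<not> E i j then 1 else 0)"
      using ij compl_degree[OF sg ij(1)] by (auto simp: laplacian_def compl_graph_def)
    have e2: "?L $$ (i,j) = (if i = j then real (degree n E i) else 0) - (if E i j then 1 else 0)"
      using ij by (simp add: laplacian_def)
    have irr: "\<not> E i i" using sg unfolding simple_graph_def by auto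
    show "(- char_matrix ?Lc x) $$ (i,j) = (K + J) $$ (i,j)"
    proof -
      have l: "(- char_matrix ?Lc x) $$ (i,j) = (if i = j then x else 0) - ?Lc $$ (i,j)"
        using ij unfolding char_matrix_def by simp
      have r: "(K + J) $$ (i,j) = (if i = j then x - real n else 0) + ?L $$ (i,j) + 1"
        using ij K unfolding K_def J_def by simp
      show ?thesis unfolding l r e1 e2 using irr by auto
    qed
  qed (use K in \<open>auto simp: J_def char_matrix_def\<close>)
  have "poly (char_poly ?Lc) x = det (K + J)"
    using char_poly_matrix[OF lap_carrier, of n "compl_graph n E" x] cm by simp
  then have s1: "(x - real n) * poly (char_poly ?Lc) x = x * det K"
    using det_J[OF K n cs] J_def by simp
  have "char_matrix ?L (real n - x) = K"
    by (rule eq_matI) (auto simp: char_matrix_def K_def)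
  then have "poly (char_poly ?L) (real n - x) = det (- K)"
    using char_poly_matrix[OF lap_carrier, of n E "real n - x"] by simp
  also have "- K = (-1) \<cdot>\<^sub>m K" by (rule eq_matI) (use K in auto)
  also have "det \<dots> = (-1)^n * det K" using K by simp
  finally have "det K = (-1)^n * poly (char_poly ?L) (real n - x)" by (simp add: power_mult_distrib[symmetric])
  also have "\<dots> = (-1)^length rs * (\<Prod>r\<leftarrow>rs. (real n - x - r))"
    unfolding c len by (simp add: poly_prod_list o_def)
  also have "\<dots> = (\<Prod>r\<leftarrow>rs. (r - (real n - x)))"
    using neg_prod[of rs "real n - x"] by (simp add: algebra_simps)
  finally show ?thesis using s1 by (simp add: algebra_simps)
qed

lemma compl_mset: assumes sg: "simple_graph n E" and n: "0 < n"
  and c: "char_poly (laplacian n E) = (\<Prod>r\<leftarrow>rs. [:-r,1:])" and len: "length rs = n"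
  and cc: "char_poly (laplacian n (compl_graph n E)) = (\<Prod>r\<leftarrow>rsc. [:-r,1:])"
  shows "mset (real n # rsc) = mset (0 # map (\<lambda>r. real n - r) rs)"
proof -
  have "poly (\<Prod>r\<leftarrow>real n # rsc. [:-r,1:]) = poly (\<Prod>r\<leftarrow>0 # map (\<lambda>r. real n - r) rs. [:-r,1:])"
  proof
    fix x
    have "poly (\<Prod>r\<leftarrow>real n # rsc. [:-r,1:]) x = (x - real n) * poly (char_poly (laplacian n (compl_graph n E))) x"
      unfolding cc by (simp add: algebra_simps)
    also have "\<dots> = x * (\<Prod>r\<leftarrow>rs. (x - (real n - r)))" by (rule char_compl_point[OF sg n c len])
    also have "\<dots> = poly (\<Prod>r\<leftarrow>0 # map (\<lambda>r. real n - r) rs. [:-r,1:]) x"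
    proof -
      have f: "(\<lambda>r. x - (real n - r)) = (\<lambda>r. r - real n + x)" by auto
      show ?thesis by (simp add: poly_prod_list o_def f)
    qed
    finally show "poly (\<Prod>r\<leftarrow>real n # rsc. [:-r,1:]) x = poly (\<Prod>r\<leftarrow>0 # map (\<lambda>r. real n - r) rs. [:-r,1:]) x" .
  qed
  then have "(\<Prod>r\<leftarrow>real n # rsc. [:-r,1:]) = (\<Prod>r\<leftarrow>0 # map (\<lambda>r. real n - r) rs. [:-r,1:])"
    by (simp only: poly_eq_poly_eq_iff)
  then show ?thesis
    by (intro multiset_eqI) (metis order_prod_lin)
qed




definition lamL :: "real list \<Rightarrow> nat \<Rightarrow> real" where
  "lamL xs i = rev (sorted_list_of_multiset (mset xs)) ! (i - 1)"

lemma sorted_rev_map_minus: "sorted xs \<Longrightarrow> sorted (rev (map (\<lambda>a. c - a) (xs :: real list)))"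
  by (induction xs) (auto simp: sorted_append)

lemma comb:
  fixes rs rsc :: "real list" and n k :: nat
  assumes len: "length rs = n" and n: "n \<ge> 1"
    and nn: "\<forall>r\<in>set rs. r \<ge> 0" and z: "0 \<in> set rs" and nnc: "\<forall>r\<in>set rsc. r \<ge> 0"
    and ms: "mset (real n # rsc) = mset (0 # map (\<lambda>r. real n - r) rs)" and k: "k \<le> n - 1"
  shows "(\<Sum>i=1..n-k-1. lamL rsc i) = real n * real (n-k-1) - sum_list rs + (\<Sum>i=1..k. lamL rs i)"
proof -
  define as where "as = sort rs"
  define f where "f a = real n - a" for a
  have las: "length as = n" and sas: "sorted as" and mas: "mset as = mset rs"
    unfolding as_def using len by auto
  have seta: "set as = set rs" unfolding as_def by simp
  have a0: "as ! 0 = 0"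
  proof -
    have "as ! 0 \<ge> 0" using nn seta las n by (metis One_nat_def Suc_le_eq nth_mem)
    moreover obtain j where j: "j < n" "as ! j = 0" using z seta las by (metis in_set_conv_nth)
    then have "as ! 0 \<le> as ! j" using sas las by (metis sorted_nth_mono zero_le)
    ultimately show ?thesis using j by simp
  qed
  define tas where "tas = tl as"
  have as_eq: "as = 0 # tas" unfolding tas_def using a0 las n
    by (metis One_nat_def Suc_le_eq hd_conv_nth length_greater_0_conv list.collapse)
  have ltas: "length tas = n - 1" using las unfolding tas_def by simp
  define bs where "bs = 0 # rev (map f tas)"
  have mbs: "mset bs = mset rsc"
  proof -
    have "add_mset (real n) (mset rsc) = add_mset 0 (image_mset f (mset rs))"
      using ms unfolding f_def by simp
    also have "mset rs = add_mset 0 (mset tas)" using mas as_eq by simp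
    finally have "add_mset (real n) (mset rsc) = add_mset (real n) (add_mset 0 (image_mset f (mset tas)))"
      unfolding f_def by (simp add: add_mset_commute)
    then show ?thesis unfolding bs_def by simp
  qed
  have sbs: "sorted bs"
  proof -
    have "sorted tas" using sas as_eq by simp
    then have "sorted (rev (map f tas))" unfolding f_def by (rule sorted_rev_map_minus)
    moreover have "\<forall>y\<in>set (rev (map f tas)). 0 \<le> y"
      using nnc mbs by (metis bs_def list.set_intros(2) set_mset_mset)
    ultimately show ?thesis unfolding bs_def by simp
  qed
  have sl1: "sorted_list_of_multiset (mset rsc) = bs"
    by (simp add: sorted_list_of_multiset_mset properties_for_sort[OF mbs sbs])
  have sl2: "sorted_list_of_multiset (mset rs) = as"
    by (simp add: sorted_list_of_multiset_mset as_def)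
  have L: "lamL rsc i = real n - as ! i" if i: "i \<in> {1..n-k-1}" for i
  proof -
    have "rev bs = map f tas @ [0]" unfolding bs_def by simp
    moreover have "i - 1 < length (map f tas)" using i ltas by auto
    ultimately have "rev bs ! (i - 1) = f (tas ! (i - 1))" by (simp add: nth_append)
    also have "tas ! (i - 1) = as ! i" using i as_eq by (simp add: nth_Cons')
    finally show ?thesis unfolding lamL_def sl1 f_def .
  qed
  have R: "lamL rs i = as ! (n - i)" if i: "i \<in> {1..k}" for i
  proof -
    have "i - 1 < length as" using i las k by auto
    then have "rev as ! (i - 1) = as ! (length as - Suc (i - 1))" by (rule rev_nth)
    also have "length as - Suc (i - 1) = n - i" using i las by auto
    finally show ?thesis unfolding lamL_def sl2 .
  qed
  define g where "g j = as ! j" for j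
  have "(\<Sum>i=1..n-k-1. lamL rsc i) = (\<Sum>i=1..n-k-1. real n - g i)"
    using L by (simp add: g_def)
  also have "\<dots> = real n * real (n-k-1) - (\<Sum>i=1..n-k-1. g i)"
    by (simp add: sum_subtractf)
  finally have lhs: "(\<Sum>i=1..n-k-1. lamL rsc i) = real n * real (n-k-1) - (\<Sum>i=1..<n-k. g i)"
    using k n by (metis Suc_diff_Suc Suc_le_eq atLeastLessThanSuc_atLeastAtMost diff_Suc_1 le_imp_less_Suc)
  have "(\<Sum>i=1..k. lamL rs i) = (\<Sum>i=1..k. g (n - i))" using R by (simp add: g_def)
  also have "\<dots> = (\<Sum>j=n-k..<n. g j)"
    by (rule sum.reindex_bij_witness[of _ "\<lambda>j. n - j" "\<lambda>i. n - i"]) (use k n in auto)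
  finally have rhs: "(\<Sum>i=1..k. lamL rs i) = (\<Sum>j=n-k..<n. g j)" .
  have "sum_list rs = sum_list as" using mas by (metis sum_mset_sum_list)
  also have "\<dots> = (\<Sum>j=0..<n. g j)" using las by (simp add: sum_list_sum_nth g_def)
  also have "\<dots> = (\<Sum>j=0..<1. g j) + (\<Sum>j=1..<n. g j)" using sum.atLeastLessThan_concat[of 0 1 n g] n by simp
  also have "(\<Sum>j=1..<n. g j) = (\<Sum>j=1..<n-k. g j) + (\<Sum>j=n-k..<n. g j)"
    using sum.atLeastLessThan_concat[of 1 "n-k" n g] k n by simp
  finally have "sum_list rs = (\<Sum>j=1..<n-k. g j) + (\<Sum>j=n-k..<n. g j)" using a0 by (simp add: g_def)
  then show ?thesis using lhs rhs by simp
qed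


lemma key:
  assumes sg: "simple_graph n E" and n: "n \<ge> 1" and k: "k \<le> n - 1"
  shows "(\<Sum>i=1..n-k-1. lap_eig n (compl_graph n E) i)
     = real n * real (n-k-1) - 2 * real (num_edges n E) + (\<Sum>i=1..k. lap_eig n E i)"
proof -
  obtain rs where c: "char_poly (laplacian n E) = (\<Prod>r\<leftarrow>rs. [:-r,1:])" and len: "length rs = n"
    using sym_split[OF lap_carrier lap_sym[OF sg]] by blast
  have sgc: "simple_graph n (compl_graph n E)" by (rule compl_sg[OF sg])
  obtain rsc where cc: "char_poly (laplacian n (compl_graph n E)) = (\<Prod>r\<leftarrow>rsc. [:-r,1:])"
    using sym_split[OF lap_carrier lap_sym[OF sgc]] by blast
  have e1: "lap_eig n E i = lamL rs i" for i
    unfolding lap_eig_def lam_def lamL_def eig_mset_of[OF c] ..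
  have e2: "lap_eig n (compl_graph n E) i = lamL rsc i" for i
    unfolding lap_eig_def lam_def lamL_def eig_mset_of[OF cc] ..
  have nn: "\<forall>r\<in>set rs. r \<ge> 0" using lap_eig_nonneg[OF sg c] by blast
  have nnc: "\<forall>r\<in>set rsc. r \<ge> 0" using lap_eig_nonneg[OF sgc cc] by blast
  have z: "0 \<in> set rs" by (rule lap_zero_eig[OF sg n c])
  have ms: "mset (real n # rsc) = mset (0 # map (\<lambda>r. real n - r) rs)"
    by (rule compl_mset[OF sg _ c len cc]) (use n in simp)
  have sl: "sum_list rs = 2 * real (num_edges n E)"
    using tr_eig[OF lap_carrier c] tr_lap[OF sg] by simp
  show ?thesis unfolding e1 e2 using comb[OF len n nn z nnc ms k] sl by simp
qed

theorem lemma4: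
  fixes n m k :: nat and G T :: "nat \<Rightarrow> nat \<Rightarrow> bool"
  assumes "simple_graph n G" and "num_edges n G = m"
    and "1 \<le> k" and "k \<le> n - 1"
    and "threshold_graph n T" and "num_edges n T = m"
    and "(\<Sum>i=1..k. lap_eig n T i) \<ge> (\<Sum>i=1..k. lap_eig n G i)"
  shows "(\<Sum>i=1..n-k-1. lap_eig n (compl_graph n T) i)
           \<ge> (\<Sum>i=1..n-k-1. lap_eig n (compl_graph n G) i)
    \<and> (\<forall>T'. threshold_graph n T' \<and> num_edges n T' = m \<longrightarrow>
           (\<Sum>i=1..n-1. lap_eig n (compl_graph n T') i)
             = (\<Sum>i=1..n-1. lap_eig n (compl_graph n G) i))"
proof
  have n: "n \<ge> 1" using assms(3,4) by linarith
  have sgT: "simple_graph n T" using assms(5) unfolding threshold_graph_def by blast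
  show "(\<Sum>i=1..n-k-1. lap_eig n (compl_graph n T) i)
           \<ge> (\<Sum>i=1..n-k-1. lap_eig n (compl_graph n G) i)"
    using key[OF sgT n assms(4)] key[OF assms(1) n assms(4)] assms(2,6,7) by simp
  show "\<forall>T'. threshold_graph n T' \<and> num_edges n T' = m \<longrightarrow>
           (\<Sum>i=1..n-1. lap_eig n (compl_graph n T') i)
             = (\<Sum>i=1..n-1. lap_eig n (compl_graph n G) i)"
  proof (intro allI impI)
    fix T' assume h: "threshold_graph n T' \<and> num_edges n T' = m"
    then have sgT': "simple_graph n T'" unfolding threshold_graph_def by blast
    show "(\<Sum>i=1..n-1. lap_eig n (compl_graph n T') i)
             = (\<Sum>i=1..n-1. lap_eig n (compl_graph n G) i)"
      using key[OF sgT' n, of 0] key[OF assms(1) n, of 0] h assms(2) by simp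
  qed
qed

end
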